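(* Let $S$ be a $\Gamma$-hemiring, let $\mu$ be a fuzzy right h-ideal of $S$ and let $x \in S$. Then the extension $\langle x,\mu\rangle$ of $\mu$ by $x$ is a fuzzy right h-ideal of $S$.
   Context: A $\Gamma$-hemiring is a pair of additive commutative semigroups with zero $S$ and $\Gamma$ together with a map $S\times\Gamma\times S\to S$, $(a,\alpha,b)\mapsto a\alpha b$, such that for all $a,b,c\in S$ and $\alpha,\beta\in\Gamma$: $(a+b)\alpha c=a\alpha c+b\alpha c$; $a\alpha(b+c)=a\alpha b+a\alpha c$; $a(\alpha+\beta)b=a\alpha b+a\beta b$; $a\alpha(b\beta c)=(a\alpha b)\beta c$; $0\alpha a=0=a\alpha 0$; $a0b=0=b0a$. A fuzzy subset of $S$ is a map $\mu:S\to[0,1]$; it is non-empty if $\mu(x)\neq 0$ for some $x\in S$. A non-empty fuzzy subset $\mu$ is a fuzzy right h-ideal if for all $x,y,a,b,z\in S$ and $\gamma\in\Gamma$: (i) $\mu(x+y)\ge\min\{\mu(x),\mu(y)\}$; (ii) $\mu(x\gamma y)\ge\mu(x)$; (iii) $x+a+z=b+z$ implies $\mu(x)\ge\min\{\mu(a),\mu(b)\}$. For a fuzzy subset $\mu$ of $S$ and $x\in S$, the extension of $\mu$ by $x$ is the fuzzy subset $\langle x,\mu\rangle$ defined by $\langle x,\mu\rangle(y)=\inf_{s\in S,\ \alpha,\gamma\in\Gamma}\mu(x\alpha s\gamma y)$ for $y\in S$. *)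

theory Defs
  imports Complex_Main
begin

text \<open>A Gamma-hemiring: S and Gamma are additive commutative semigroups with zero
  (modelled by the type class comm_monoid_add), together with a ternary map
  m :: S => Gamma => S => S written a alpha b.\<close>

definition gamma_hemiring :: "('s::comm_monoid_add \<Rightarrow> 'g::comm_monoid_add \<Rightarrow> 's \<Rightarrow> 's) \<Rightarrow> bool" where
  "gamma_hemiring m \<longleftrightarrow>
     (\<forall>a b c \<alpha>. m (a + b) \<alpha> c = m a \<alpha> c + m b \<alpha> c) \<and>
     (\<forall>a b c \<alpha>. m a \<alpha> (b + c) = m a \<alpha> b + m a \<alpha> c) \<and>
     (\<forall>a b \<alpha> \<beta>. m a (\<alpha> + \<beta>) b = m a \<alpha> b + m a \<beta> b) \<and>
     (\<forall>a b c \<alpha> \<beta>. m a \<alpha> (m b \<beta> c) = m (m a \<alpha> b) \<beta> c) \<and>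
     (\<forall>a \<alpha>. m 0 \<alpha> a = 0 \<and> m a \<alpha> 0 = 0) \<and>
     (\<forall>a b. m a 0 b = 0 \<and> m b 0 a = 0)"

definition fuzzy_subset :: "('s \<Rightarrow> real) \<Rightarrow> bool" where
  "fuzzy_subset \<mu> \<longleftrightarrow> (\<forall>x. 0 \<le> \<mu> x \<and> \<mu> x \<le> 1)"

definition fuzzy_right_h_ideal ::
  "('s::comm_monoid_add \<Rightarrow> 'g \<Rightarrow> 's \<Rightarrow> 's) \<Rightarrow> ('s \<Rightarrow> real) \<Rightarrow> bool" where
  "fuzzy_right_h_ideal m \<mu> \<longleftrightarrow>
     fuzzy_subset \<mu> \<and> (\<exists>x. \<mu> x \<noteq> 0) \<and>
     (\<forall>x y. \<mu> (x + y) \<ge> min (\<mu> x) (\<mu> y)) \<and>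
     (\<forall>x y \<gamma>. \<mu> (m x \<gamma> y) \<ge> \<mu> x) \<and>
     (\<forall>x a b z. x + a + z = b + z \<longrightarrow> \<mu> x \<ge> min (\<mu> a) (\<mu> b))"

text \<open>Extension of mu by x: <x,mu>(y) = inf over s, alpha, gamma of mu(x alpha s gamma y).
  By associativity the bracketing is immaterial; we use ((x alpha s) gamma y).\<close>
definition fuzzy_extension ::
  "('s \<Rightarrow> 'g \<Rightarrow> 's \<Rightarrow> 's) \<Rightarrow> 's \<Rightarrow> ('s \<Rightarrow> real) \<Rightarrow> 's \<Rightarrow> real" where
  "fuzzy_extension m x \<mu> y = (INF p \<in> (UNIV :: ('s \<times> 'g \<times> 'g) set).
      \<mu> (m (m x (fst (snd p)) (fst p)) (snd (snd p)) y))"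

end

theory Submission
  imports Defs
begin

theorem theorem3p2:
  fixes m :: "'s::comm_monoid_add \<Rightarrow> 'g::comm_monoid_add \<Rightarrow> 's \<Rightarrow> 's"
    and \<mu> :: "'s \<Rightarrow> real" and x :: 's
  assumes "gamma_hemiring m"
    and "fuzzy_right_h_ideal m \<mu>"
  shows "fuzzy_right_h_ideal m (fuzzy_extension m x \<mu>)"
proof -
  define P where "P = (\<lambda>p::('s \<times> 'g \<times> 'g). m x (fst (snd p)) (fst p))"
  define G where "G = (\<lambda>p::('s \<times> 'g \<times> 'g). snd (snd p))"
  have E: "fuzzy_extension m x \<mu> y = (INF p. \<mu> (m (P p) (G p) y))" for y
    unfolding fuzzy_extension_def P_def G_def by simp
  have ax: "\<And>a b c \<alpha>. m a \<alpha> (b + c) = m a \<alpha> b + m a \<alpha> c"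
    "\<And>a b c \<alpha> \<beta>. m a \<alpha> (m b \<beta> c) = m (m a \<alpha> b) \<beta> c"
    "\<And>a \<alpha>. m a \<alpha> 0 = 0"
    using assms(1) unfolding gamma_hemiring_def by auto
  have fs: "\<And>y. 0 \<le> \<mu> y \<and> \<mu> y \<le> 1"
    and ne: "\<exists>y. \<mu> y \<noteq> 0"
    and i1: "\<And>a b. \<mu> (a + b) \<ge> min (\<mu> a) (\<mu> b)"
    and i2: "\<And>a b \<gamma>. \<mu> (m a \<gamma> b) \<ge> \<mu> a"
    and i3: "\<And>a b c z. a + b + z = c + z \<Longrightarrow> \<mu> a \<ge> min (\<mu> b) (\<mu> c)"
    using assms(2) unfolding fuzzy_right_h_ideal_def fuzzy_subset_def by (auto, blast)
  have bdd: "bdd_below (range (\<lambda>p. \<mu> (m (P p) (G p) y)))" for y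
    using fs by (intro bdd_belowI[where m=0]) auto
  have low: "fuzzy_extension m x \<mu> y \<le> \<mu> (m (P p) (G p) y)" for y p
    unfolding E by (rule cINF_lower[OF bdd]) simp
  have great: "(\<And>p. c \<le> \<mu> (m (P p) (G p) y)) \<Longrightarrow> c \<le> fuzzy_extension m x \<mu> y" for c y
    unfolding E by (rule cINF_greatest) auto
  have "fuzzy_subset (fuzzy_extension m x \<mu>)"
    unfolding fuzzy_subset_def
  proof
    fix y
    have "0 \<le> fuzzy_extension m x \<mu> y" by (rule great) (use fs in auto)
    moreover have "fuzzy_extension m x \<mu> y \<le> 1" using low[of y undefined] fs by (meson order_trans)
    ultimately show "0 \<le> fuzzy_extension m x \<mu> y \<and> fuzzy_extension m x \<mu> y \<le> 1" by simp
  qed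
  moreover have "\<exists>y. fuzzy_extension m x \<mu> y \<noteq> 0"
  proof -
    obtain y0 where y0: "\<mu> y0 \<noteq> 0" using ne by blast
    have "\<mu> 0 \<ge> \<mu> y0" using i2[of y0 undefined 0] ax(3) by simp
    hence pos: "\<mu> 0 > 0" using y0 fs[of y0] by linarith
    have "\<mu> 0 \<le> fuzzy_extension m x \<mu> 0" by (rule great) (simp add: ax(3))
    thus ?thesis using pos by (intro exI[of _ 0]) linarith
  qed
  moreover have "\<forall>a b. fuzzy_extension m x \<mu> (a + b) \<ge>
      min (fuzzy_extension m x \<mu> a) (fuzzy_extension m x \<mu> b)"
  proof (intro allI)
    fix a b :: 's
    show "fuzzy_extension m x \<mu> (a + b) \<ge> min (fuzzy_extension m x \<mu> a) (fuzzy_extension m x \<mu> b)"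
    proof (rule great)
      fix p
      have "min (fuzzy_extension m x \<mu> a) (fuzzy_extension m x \<mu> b)
          \<le> min (\<mu> (m (P p) (G p) a)) (\<mu> (m (P p) (G p) b))"
        using low[of a p] low[of b p] by (simp add: min.coboundedI1 min.coboundedI2)
      also have "\<dots> \<le> \<mu> (m (P p) (G p) (a + b))" using i1 ax(1) by simp
      finally show "min (fuzzy_extension m x \<mu> a) (fuzzy_extension m x \<mu> b)
          \<le> \<mu> (m (P p) (G p) (a + b))" .
    qed
  qed
  moreover have "\<forall>a b \<gamma>. fuzzy_extension m x \<mu> (m a \<gamma> b) \<ge> fuzzy_extension m x \<mu> a"
  proof (intro allI)
    fix a b :: 's and \<gamma>
    show "fuzzy_extension m x \<mu> (m a \<gamma> b) \<ge> fuzzy_extension m x \<mu> a"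
    proof (rule great)
      fix p
      have "fuzzy_extension m x \<mu> a \<le> \<mu> (m (P p) (G p) a)" by (rule low)
      also have "\<dots> \<le> \<mu> (m (m (P p) (G p) a) \<gamma> b)" by (rule i2)
      also have "\<dots> = \<mu> (m (P p) (G p) (m a \<gamma> b))" by (simp add: ax(2))
      finally show "fuzzy_extension m x \<mu> a \<le> \<mu> (m (P p) (G p) (m a \<gamma> b))" .
    qed
  qed
  moreover have "\<forall>y a b z. y + a + z = b + z \<longrightarrow> fuzzy_extension m x \<mu> y \<ge>
      min (fuzzy_extension m x \<mu> a) (fuzzy_extension m x \<mu> b)"
  proof (intro allI impI)
    fix y a b z :: 's
    assume h: "y + a + z = b + z"
    show "fuzzy_extension m x \<mu> y \<ge> min (fuzzy_extension m x \<mu> a) (fuzzy_extension m x \<mu> b)"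
    proof (rule great)
      fix p
      have "m (P p) (G p) (y + a + z) = m (P p) (G p) (b + z)" using h by simp
      hence "m (P p) (G p) y + m (P p) (G p) a + m (P p) (G p) z
           = m (P p) (G p) b + m (P p) (G p) z" by (simp add: ax(1))
      hence "\<mu> (m (P p) (G p) y) \<ge> min (\<mu> (m (P p) (G p) a)) (\<mu> (m (P p) (G p) b))"
        by (rule i3)
      moreover have "min (fuzzy_extension m x \<mu> a) (fuzzy_extension m x \<mu> b)
          \<le> min (\<mu> (m (P p) (G p) a)) (\<mu> (m (P p) (G p) b))"
        using low[of a p] low[of b p] by (simp add: min.coboundedI1 min.coboundedI2)
      ultimately show "min (fuzzy_extension m x \<mu> a) (fuzzy_extension m x \<mu> b)
          \<le> \<mu> (m (P p) (G p) y)" by linarith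
    qed
  qed
  ultimately show ?thesis unfolding fuzzy_right_h_ideal_def by blast
qed

end
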